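(* There exists a constant $K$ such that $|\dot\lambda_{i,k}(\theta_0)|\le K/i$ for all $i\ge1$ and all $1\le k\le p+q+1$.
   Context: $d_0\in(-1/2,1/2)$; $a(z)=1-\sum_{i=1}^pa_iz^i$, $b(z)=1-\sum_{i=1}^qb_iz^i$ have all roots outside the unit disk and no common factors; $\theta_0=(a_1,\dots,a_p,b_1,\dots,b_q,d_0)$. For $\theta=(\theta_1,\dots,\theta_{p+q},d)$ near $\theta_0$, $a_\theta(z)=1-\sum_{i=1}^p\theta_iz^i$, $b_\theta(z)=1-\sum_{j=1}^q\theta_{p+j}z^j$, and $\dot\lambda_{i,k}(\theta)$ is the $i$-th coefficient of the power series $\frac{\partial}{\partial\theta_k}\big(b_\theta^{-1}(z)a_\theta(z)(1-z)^{d-d_0}a_{\theta_0}^{-1}(z)b_{\theta_0}(z)\big)$ (with $\theta_{p+q+1}=d$). *)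

theory Defs
  imports "HOL-Analysis.Analysis" "HOL-Computational_Algebra.Computational_Algebra"
begin

definition one_minus_poly :: "nat \<Rightarrow> (nat \<Rightarrow> real) \<Rightarrow> real poly" where
  "one_minus_poly n c = 1 - (\<Sum>i=1..n. monom (c i) i)"

text \<open>a_theta and b_theta for a parameter vector theta = (theta_1,...,theta_{p+q+1}),
  stored as a function nat => real (indices 1..p+q+1; theta_{p+q+1} = d).\<close>
definition a_theta :: "nat \<Rightarrow> (nat \<Rightarrow> real) \<Rightarrow> real poly" where
  "a_theta p \<theta> = one_minus_poly p \<theta>"

definition b_theta :: "nat \<Rightarrow> nat \<Rightarrow> (nat \<Rightarrow> real) \<Rightarrow> real poly" where
  "b_theta p q \<theta> = one_minus_poly q (\<lambda>j. \<theta> (p + j))"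

definition one_minus_X_powr :: "real \<Rightarrow> real fps" where
  "one_minus_X_powr \<delta> = Abs_fps (\<lambda>n. (-1) ^ n * (\<delta> gchoose n))"

definition theta0 :: "nat \<Rightarrow> nat \<Rightarrow> (nat \<Rightarrow> real) \<Rightarrow> (nat \<Rightarrow> real) \<Rightarrow> real \<Rightarrow> nat \<Rightarrow> real" where
  "theta0 p q a b d0 i =
     (if 1 \<le> i \<and> i \<le> p then a i
      else if p < i \<and> i \<le> p + q then b (i - p)
      else if i = p + q + 1 then d0 else 0)"

definition lam_series :: "nat \<Rightarrow> nat \<Rightarrow> (nat \<Rightarrow> real) \<Rightarrow> (nat \<Rightarrow> real) \<Rightarrow> real fps" where
  "lam_series p q \<theta>0 \<theta> =
     inverse (fps_of_poly (b_theta p q \<theta>)) * fps_of_poly (a_theta p \<theta>)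
     * one_minus_X_powr (\<theta> (p + q + 1) - \<theta>0 (p + q + 1))
     * inverse (fps_of_poly (a_theta p \<theta>0)) * fps_of_poly (b_theta p q \<theta>0)"

end

theory Submission
  imports Defs "HOL-Complex_Analysis.Complex_Analysis"
begin


lemma inv_fps_map_real:
  fixes P :: "real poly"
  assumes "coeff P 0 \<noteq> 0"
  shows "inverse (fps_of_poly (map_poly complex_of_real P)) $ n
         = complex_of_real (inverse (fps_of_poly P) $ n)"
proof -
  define G where "G = Abs_fps (\<lambda>n. complex_of_real (inverse (fps_of_poly P) $ n))"
  have "fps_of_poly (map_poly complex_of_real P) * G = 1"
  proof (rule fps_ext)
    fix m
    have "(fps_of_poly P * inverse (fps_of_poly P)) $ m = (1::real fps) $ m"
      using assms by (simp add: inverse_mult_eq_1')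
    hence "(\<Sum>i=0..m. coeff P i * inverse (fps_of_poly P) $ (m - i)) = (1::real fps) $ m"
      by (simp add: fps_mult_nth)
    hence "complex_of_real (\<Sum>i=0..m. coeff P i * inverse (fps_of_poly P) $ (m - i))
           = (1::complex fps) $ m"
      by simp
    thus "(fps_of_poly (map_poly complex_of_real P) * G) $ m = (1::complex fps) $ m"
      by (simp add: fps_mult_nth G_def coeff_map_poly)
  qed
  hence "inverse (fps_of_poly (map_poly complex_of_real P)) = G"
    by (rule fps_inverse_unique)
  thus ?thesis by (simp add: G_def)
qed

lemma inv_coeff_decay:
  fixes P :: "real poly"
  assumes nz: "\<forall>z::complex. cmod z \<le> 1 \<longrightarrow> poly (map_poly complex_of_real P) z \<noteq> 0"
  shows "\<exists>M. \<forall>n. (real n + real N) * \<bar>inverse (fps_of_poly P) $ n\<bar> \<le> M"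
proof -
  define Q where "Q = map_poly complex_of_real P"
  have Q0: "poly Q 0 \<noteq> 0" using nz by (simp add: Q_def)
  hence "Q \<noteq> 0" by auto
  hence fin: "finite {z. poly Q z = 0}" by (rule poly_roots_finite)
  define R where "R = Min (insert 2 (norm ` {z. poly Q z = 0}))"
  have R1: "R > 1"
    unfolding R_def using fin nz
    by (subst Min_gr_iff) (auto simp: Q_def not_le[symmetric])
  have Rnz: "poly Q z \<noteq> 0" if "norm z < R" for z
  proof
    assume "poly Q z = 0"
    hence "R \<le> norm z" unfolding R_def using fin by (intro Min_le) auto
    with that show False by simp
  qed
  have cP0: "coeff P 0 \<noteq> 0"
    using Q0 by (simp add: Q_def poly_0_coeff_0 coeff_map_poly)
  have exp: "(\<lambda>z. inverse (poly Q z)) has_fps_expansion inverse (fps_of_poly Q)"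
  proof (rule has_fps_expansion_inverse)
    have "eval_fps (fps_of_poly Q) has_fps_expansion fps_of_poly Q"
      by (rule eval_fps_has_fps_expansion) simp
    moreover have "eval_fps (fps_of_poly Q) = poly Q" by (rule ext) simp
    ultimately show "(\<lambda>z. poly Q z) has_fps_expansion fps_of_poly Q" by simp
    show "fps_of_poly Q $ 0 \<noteq> 0" using Q0 by (simp add: poly_0_coeff_0)
  qed
  have hol: "(\<lambda>z. inverse (poly Q z)) holomorphic_on eball 0 (ereal R)"
    using Rnz by (auto intro!: holomorphic_intros)
  have rad: "fps_conv_radius (inverse (fps_of_poly Q)) \<ge> ereal R"
    by (rule holomorphic_on_imp_fps_conv_radius_ge[OF exp hol])
  define r where "r = (1 + R) / 2"
  have r1: "r > 1" and rR: "r < R" using R1 by (auto simp: r_def)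
  have "norm (complex_of_real r) < fps_conv_radius (inverse (fps_of_poly Q))"
    proof -
    have "ereal r < ereal R" using rR by simp
    also note rad
    finally show ?thesis using r1 by simp
  qed
  hence "summable (\<lambda>n. norm (fps_nth (inverse (fps_of_poly Q)) n * complex_of_real r ^ n))"
    unfolding fps_conv_radius_def by (rule abs_summable_in_conv_radius)
  hence "summable (\<lambda>n. \<bar>inverse (fps_of_poly P) $ n\<bar> * r ^ n)"
    using r1 by (simp add: Q_def inv_fps_map_real[OF cP0] norm_mult norm_power)
  hence B1: "Bseq (\<lambda>n. \<bar>inverse (fps_of_poly P) $ n\<bar> * r ^ n)"
    by (intro convergent_imp_Bseq convergentI[OF summable_LIMSEQ_zero])
  have "(\<lambda>n. real n / r ^ n + real N * (1 / r) ^ n) \<longlonglongrightarrow> 0 + real N * 0"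
    using r1 by (intro tendsto_intros lim_n_over_pown LIMSEQ_power_zero) auto
  hence B2: "Bseq (\<lambda>n. real n / r ^ n + real N * (1 / r) ^ n)"
    by (intro convergent_imp_Bseq convergentI)
  have "Bseq (\<lambda>n. (real n / r ^ n + real N * (1 / r) ^ n) * (\<bar>inverse (fps_of_poly P) $ n\<bar> * r ^ n))"
    by (rule Bseq_mult[OF B2 B1])
  then obtain K where K: "\<And>n. norm ((real n / r ^ n + real N * (1 / r) ^ n) * (\<bar>inverse (fps_of_poly P) $ n\<bar> * r ^ n)) \<le> K"
    unfolding Bseq_def by blast
  show ?thesis
  proof (intro exI allI)
    fix n
    have "(real n / r ^ n + real N * (1 / r) ^ n) * (\<bar>inverse (fps_of_poly P) $ n\<bar> * r ^ n)
          = (real n + real N) * \<bar>inverse (fps_of_poly P) $ n\<bar>"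
      using r1 by (simp add: field_simps power_divide)
    thus "(real n + real N) * \<bar>inverse (fps_of_poly P) $ n\<bar> \<le> K"
      by (metis K abs_ge_self order_trans real_norm_def)
  qed
qed



lemma prod_neg_fact: "(\<Prod>x\<in>{1..m}. (0::real) - real x) = (-1) ^ m * fact m"
  by (induction m) (auto simp: prod.nat_ivl_Suc' algebra_simps)

lemma deriv_gchoose:
  assumes "i \<ge> 1"
  shows "((\<lambda>t::real. (-1) ^ i * (t gchoose i)) has_real_derivative (-1 / real i)) (at 0)"
proof -
  obtain m where i: "i = Suc m" using assms by (cases i) auto
  define G where "G = (\<lambda>t::real. \<Prod>x\<in>{1..m}. t - real x)"
  have eq: "(\<lambda>t::real. (-1) ^ i * (t gchoose i)) = (\<lambda>t. (-1) ^ i * (t * G t) / fact i)"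
    by (rule ext) (simp add: i gbinomial_Suc G_def prod.atLeast_Suc_atMost)
  obtain G' where G': "(G has_real_derivative G') (at 0)"
  proof
    show "(G has_real_derivative (\<Sum>x\<in>{1..m}. 1 * (\<Prod>y\<in>{1..m}-{x}. 0 - real y))) (at 0)"
      unfolding G_def by (rule has_field_derivative_prod) (auto intro!: derivative_eq_intros)
  qed
  from DERIV_mult[OF DERIV_ident G'] have d1: "((\<lambda>t. t * G t) has_real_derivative G 0) (at 0)"
    by simp
  have "((\<lambda>t. (-1) ^ i * (t * G t) / fact i) has_real_derivative
         ((-1) ^ i * (1 * G 0 + 0 * G') / fact i)) (at 0)"
    using DERIV_cdivide[OF DERIV_cmult[OF d1], of "(-1)^i" "fact i"] by simp
  moreover have "(-1) ^ i * (1 * G 0 + 0 * G') / fact i = (-1 / real i :: real)"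
  proof -
    have G0: "G 0 = (-1) ^ m * fact m" unfolding G_def by (rule prod_neg_fact)
    have pos: "fact m + fact m * real m > (0::real)" by (simp add: add_pos_nonneg)
    have mm: "(-1::real) ^ m * (-1) ^ m = 1" by (simp add: power_mult_distrib[symmetric])
    have "(-1) ^ i * (1 * G 0 + 0 * G') / fact i = - ((-1) ^ m * (-1) ^ m) * fact m / fact (Suc m)"
      by (simp add: G0 i)
    also have "\<dots> = -1 / real i" using pos by (simp add: mm i field_simps)
    finally show ?thesis .
  qed
  ultimately show ?thesis by (simp add: eq)
qed

lemma deriv_poly0:
  assumes "i \<ge> 1"
  shows "((\<lambda>t::real. \<Sum>n<Suc i. t ^ n * c n) has_real_derivative c 1) (at 0)"
proof -
  have "((\<lambda>t::real. \<Sum>n<Suc i. t ^ n * c n) has_real_derivative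
          (\<Sum>n<Suc i. (real n * 0 ^ (n - 1)) * c n)) (at 0)"
    by (auto intro!: derivative_eq_intros)
  moreover have "(\<Sum>n<Suc i. (real n * 0 ^ (n - 1)) * c n) = (\<Sum>n<Suc i. if n = 1 then c 1 else 0)"
    by (rule sum.cong) auto
  ultimately show ?thesis using assms by (simp del: sum.lessThan_Suc add: sum.delta)
qed

lemma fps_power_nth_low:
  fixes x :: "real fps"
  assumes "x $ 0 = 0"
  shows "j < m \<Longrightarrow> (x ^ m) $ j = 0"
proof (induction m arbitrary: j)
  case 0 thus ?case by simp
next
  case (Suc m)
  have "(x * x ^ m) $ j = (\<Sum>a=0..j. x $ a * (x ^ m) $ (j - a))" by (simp add: fps_mult_nth)
  also have "\<dots> = 0"
  proof (rule sum.neutral, intro ballI)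
    fix a assume "a \<in> {0..j}"
    show "x $ a * (x ^ m) $ (j - a) = 0"
    proof (cases "a = 0")
      case True thus ?thesis using assms by simp
    next
      case False thus ?thesis using Suc.IH[of "j-a"] Suc.prems \<open>a \<in> {0..j}\<close> by auto
    qed
  qed
  finally show ?case by simp
qed

lemma inv_one_minus_nth:
  fixes g :: "real fps"
  assumes g0: "g $ 0 = 0"
  shows "inverse (1 - fps_const t * g) $ i = (\<Sum>n<Suc i. t ^ n * (g ^ n) $ i)"
proof -
  define x where "x = fps_const t * g"
  define h where "h = inverse (1 - x)"
  have x0: "x $ 0 = 0" using g0 by (simp add: x_def)
  have hx: "h * (1 - x) = 1" unfolding h_def by (rule inverse_mult_eq_1) (simp add: x0)
  have "(\<Sum>n<Suc i. x ^ n) = h * ((1 - x) * (\<Sum>n<Suc i. x ^ n))"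
    using hx by (simp add: mult.assoc[symmetric])
  also have "(1 - x) * (\<Sum>n<Suc i. x ^ n) = 1 - x ^ Suc i"
    by (rule one_diff_power_eq[symmetric])
  also have "h * (1 - x ^ Suc i) = h - h * x ^ Suc i"
    by (simp add: right_diff_distrib)
  finally have S: "(\<Sum>n<Suc i. x ^ n) $ i = h $ i - (h * x ^ Suc i) $ i" by simp
  have "(h * x ^ Suc i) $ i = (\<Sum>a=0..i. h $ a * (x ^ Suc i) $ (i - a))" by (simp add: fps_mult_nth)
  also have "\<dots> = 0"
    by (rule sum.neutral) (auto simp: fps_power_nth_low[OF x0] simp del: power_Suc)
  finally have "h $ i = (\<Sum>n<Suc i. x ^ n) $ i" using S by simp
  also have "\<dots> = (\<Sum>n<Suc i. t ^ n * (g ^ n) $ i)"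
    by (simp add: fps_sum_nth x_def power_mult_distrib fps_const_power)
  finally show ?thesis by (simp add: h_def x_def)
qed



lemma omp_cong:
  assumes "\<And>i. 1 \<le> i \<Longrightarrow> i \<le> n \<Longrightarrow> c i = c' i"
  shows "one_minus_poly n c = one_minus_poly n c'"
proof -
  have "(\<Sum>i=1..n. monom (c i) i) = (\<Sum>i=1..n. monom (c' i) i)"
    by (rule sum.cong) (auto simp: assms)
  thus ?thesis by (simp add: one_minus_poly_def)
qed

lemma omp_upd:
  assumes "1 \<le> k" "k \<le> n"
  shows "one_minus_poly n (c(k := c k + t)) = one_minus_poly n c - monom t k"
proof -
  have "(\<Sum>i=1..n. monom ((c(k := c k + t)) i) i)
        = (\<Sum>i=1..n. monom (c i) i + (if i = k then monom t k else 0))"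
    by (rule sum.cong) (auto simp: add_monom[symmetric])
  also have "\<dots> = (\<Sum>i=1..n. monom (c i) i) + monom t k"
    using assms by (simp add: sum.distrib sum.delta)
  finally show ?thesis by (simp add: one_minus_poly_def algebra_simps)
qed

lemma omxp_0: "one_minus_X_powr 0 = 1"
  by (simp add: one_minus_X_powr_def fps_eq_iff gbinomial_0_left)

lemma Xinv_bound:
  fixes F :: "real fps"
  assumes M: "\<forall>n. (real n + real N) * \<bar>F $ n\<bar> \<le> M" and j: "j \<le> N" and i: "i \<ge> 1"
  shows "\<bar>(fps_X ^ j * F) $ i\<bar> \<le> M / real i"
proof -
  have M0: "M \<ge> 0" using M[rule_format, of 0] by (meson abs_ge_zero mult_nonneg_nonneg of_nat_0_le_iff order_trans add_nonneg_nonneg)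
  show ?thesis
  proof (cases "i < j")
    case True thus ?thesis using M0 by (simp add: fps_X_power_mult_nth)
  next
    case False
    have "real i * \<bar>F $ (i - j)\<bar> \<le> (real (i - j) + real N) * \<bar>F $ (i - j)\<bar>"
      using False j by (intro mult_right_mono) auto
    also have "\<dots> \<le> M" using M by blast
    finally have "\<bar>F $ (i - j)\<bar> \<le> M / real i" using i by (simp add: field_simps)
    thus ?thesis using False by (simp add: fps_X_power_mult_nth)
  qed
qed

lemma lin_deriv: "((\<lambda>t::real. - (t * c)) has_real_derivative - c) (at 0)"
  by (auto intro!: derivative_eq_intros)

theorem lemma3:
  fixes p q :: nat and a b :: "nat \<Rightarrow> real" and d0 :: real
  assumes "-1/2 < d0" "d0 < 1/2"
    and "\<forall>z::complex. cmod z \<le> 1 \<longrightarrow> poly (map_poly complex_of_real (one_minus_poly p a)) z \<noteq> 0"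
    and "\<forall>z::complex. cmod z \<le> 1 \<longrightarrow> poly (map_poly complex_of_real (one_minus_poly q b)) z \<noteq> 0"
    and "coprime (one_minus_poly p a) (one_minus_poly q b)"
  shows "\<exists>K::real. \<forall>i\<ge>1. \<forall>k\<in>{1..p+q+1}.
           (let \<theta>\<^sub>0 = theta0 p q a b d0 in
            \<exists>D. ((\<lambda>t. fps_nth (lam_series p q \<theta>\<^sub>0 (\<theta>\<^sub>0(k := \<theta>\<^sub>0 k + t))) i)
                   has_real_derivative D) (at 0)
                \<and> \<bar>D\<bar> \<le> K / real i)"
proof -
  define T where "T = theta0 p q a b d0"
  define PA where "PA = one_minus_poly p a"
  define PB where "PB = one_minus_poly q b"
  define A where "A = fps_of_poly PA"
  define B where "B = fps_of_poly PB"
  have ta: "a_theta p T = PA"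
    unfolding a_theta_def PA_def T_def by (rule omp_cong) (simp add: theta0_def)
  have tb: "b_theta p q T = PB"
    unfolding b_theta_def PB_def T_def by (rule omp_cong) (simp add: theta0_def)
  have td: "T (p + q + 1) = d0" by (simp add: T_def theta0_def)
  have A0: "A $ 0 \<noteq> 0"
    using assms(3)[rule_format, of 0] by (simp add: A_def PA_def poly_0_coeff_0 coeff_map_poly)
  have B0: "B $ 0 \<noteq> 0"
    using assms(4)[rule_format, of 0] by (simp add: B_def PB_def poly_0_coeff_0 coeff_map_poly)
  have iA: "A * inverse A = 1" and iB: "inverse B * B = 1"
    using A0 B0 by (auto intro: inverse_mult_eq_1 inverse_mult_eq_1')
  obtain MA where MA: "\<forall>n. (real n + real p) * \<bar>inverse A $ n\<bar> \<le> MA"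
    using inv_coeff_decay[OF assms(3), of p] unfolding A_def PA_def by blast
  obtain MB where MB: "\<forall>n. (real n + real q) * \<bar>inverse B $ n\<bar> \<le> MB"
    using inv_coeff_decay[OF assms(4), of q] unfolding B_def PB_def by blast
  have MA0: "MA \<ge> 0" using MA[rule_format, of 0] by (meson abs_ge_zero mult_nonneg_nonneg of_nat_0_le_iff order_trans add_nonneg_nonneg)
  have MB0: "MB \<ge> 0" using MB[rule_format, of 0] by (meson abs_ge_zero mult_nonneg_nonneg of_nat_0_le_iff order_trans add_nonneg_nonneg)
  have L: "lam_series p q T \<theta> = inverse (fps_of_poly (b_theta p q \<theta>)) * fps_of_poly (a_theta p \<theta>)
             * one_minus_X_powr (\<theta> (p + q + 1) - d0) * inverse A * B" for \<theta>
    using ta tb td by (simp add: lam_series_def A_def B_def)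
  define K where "K = 1 + MA + MB"
  have main: "\<exists>D. ((\<lambda>t. fps_nth (lam_series p q T (T(k := T k + t))) i)
                   has_real_derivative D) (at 0) \<and> \<bar>D\<bar> \<le> K / real i"
    if i: "i \<ge> 1" and k: "k \<in> {1..p+q+1}" for i k
  proof -
    have ipos: "real i > 0" using i by simp
    consider "k \<le> p" | "p < k" "k \<le> p + q" | "k = p + q + 1" using k by fastforce
    thus ?thesis
    proof cases
      case 1
      define Y where "Y = fps_X ^ k * inverse A"
      have eq: "lam_series p q T (T(k := T k + t)) $ i = - (t * Y $ i)" for t
      proof -
        have a1: "a_theta p (T(k := T k + t)) = PA - monom t k"
          using omp_upd[of k p T t] 1 k ta by (simp add: a_theta_def)
        have b1: "b_theta p q (T(k := T k + t)) = PB"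
          unfolding tb[symmetric] b_theta_def using 1 by (intro omp_cong) auto
        have d1: "(T(k := T k + t)) (p + q + 1) = d0" using 1 td by simp
        have "lam_series p q T (T(k := T k + t))
              = inverse B * (A - fps_const t * fps_X ^ k) * 1 * inverse A * B"
          unfolding L a1 b1 d1 by (simp add: omxp_0 A_def B_def fps_of_poly_diff fps_of_poly_monom)
        also have "\<dots> = (inverse B * B) * (A * inverse A) - fps_const t * Y * (inverse B * B)"
          by (simp add: Y_def algebra_simps)
        also have "\<dots> = 1 - fps_const t * Y" by (simp add: iA iB)
        finally show ?thesis using i by simp
      qed
      have "\<bar>Y $ i\<bar> \<le> MA / real i"
        unfolding Y_def using 1 i MA by (intro Xinv_bound) auto
      also have "\<dots> \<le> K / real i" using ipos MB0 by (intro divide_right_mono) (auto simp: K_def)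
      finally show ?thesis using lin_deriv[of "Y $ i"] by (auto simp: eq)
    next
      case 2
      define j where "j = k - p"
      have j: "1 \<le> j" "j \<le> q" "k = p + j" using 2 by (auto simp: j_def)
      define g where "g = fps_X ^ j * inverse B"
      have g0: "g $ 0 = 0" using j by (simp add: g_def fps_X_power_mult_nth)
      have eq: "lam_series p q T (T(k := T k + t)) $ i = (\<Sum>n<Suc i. t ^ n * (g ^ n) $ i)" for t
      proof -
        have a1: "a_theta p (T(k := T k + t)) = PA"
          unfolding ta[symmetric] a_theta_def using 2 by (intro omp_cong) auto
        have "(\<lambda>j'. (T(k := T k + t)) (p + j')) = (\<lambda>j'. T (p + j'))(j := T (p + j) + t)"
          using j by (auto simp: fun_eq_iff)
        hence b1: "b_theta p q (T(k := T k + t)) = PB - monom t j"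
          using omp_upd[of j q "\<lambda>j'. T (p + j')" t] j tb by (simp add: b_theta_def)
        have d1: "(T(k := T k + t)) (p + q + 1) = d0" using 2 td by simp
        have BB: "B - fps_const t * fps_X ^ j = B * (1 - fps_const t * g)"
          using iB by (simp add: g_def algebra_simps)
        have "lam_series p q T (T(k := T k + t))
              = inverse (B - fps_const t * fps_X ^ j) * A * 1 * inverse A * B"
          unfolding L a1 b1 d1 by (simp add: omxp_0 A_def B_def fps_of_poly_diff fps_of_poly_monom)
        also have "\<dots> = inverse (1 - fps_const t * g) * (A * inverse A) * (inverse B * B)"
        proof -
          have "inverse (B - fps_const t * fps_X ^ j) = inverse B * inverse (1 - fps_const t * g)"
            unfolding BB by (rule fps_inverse_mult)
          thus ?thesis by (simp add: algebra_simps)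
        qed
        also have "\<dots> = inverse (1 - fps_const t * g)" by (simp add: iA iB)
        finally show ?thesis by (simp add: inv_one_minus_nth[OF g0])
      qed
      have "\<bar>g $ i\<bar> \<le> MB / real i"
        unfolding g_def using j i MB by (intro Xinv_bound) auto
      also have "\<dots> \<le> K / real i" using ipos MA0 by (intro divide_right_mono) (auto simp: K_def)
      finally have bd: "\<bar>(g ^ 1) $ i\<bar> \<le> K / real i" by simp
      show ?thesis using deriv_poly0[OF i, of "\<lambda>n. (g ^ n) $ i"] bd by (auto simp: eq)
    next
      case 3
      have eq: "lam_series p q T (T(k := T k + t)) $ i = (-1) ^ i * (t gchoose i)" for t
      proof -
        have a1: "a_theta p (T(k := T k + t)) = PA"
          unfolding ta[symmetric] a_theta_def using 3 by (intro omp_cong) auto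
        have b1: "b_theta p q (T(k := T k + t)) = PB"
          unfolding tb[symmetric] b_theta_def using 3 by (intro omp_cong) auto
        have d1: "(T(k := T k + t)) (p + q + 1) = d0 + t" using 3 td by simp
        have "lam_series p q T (T(k := T k + t))
              = inverse B * A * one_minus_X_powr t * inverse A * B"
          unfolding L a1 b1 d1 by (simp add: A_def B_def)
        also have "\<dots> = one_minus_X_powr t * (A * inverse A) * (inverse B * B)"
          by (simp add: algebra_simps)
        also have "\<dots> = one_minus_X_powr t" by (simp add: iA iB)
        finally show ?thesis by (simp add: one_minus_X_powr_def)
      qed
      have "\<bar>-1 / real i\<bar> \<le> K / real i"
        using ipos MA0 MB0 by (simp add: K_def abs_div divide_right_mono)
      thus ?thesis using deriv_gchoose[OF i] by (auto simp: eq)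
    qed
  qed
  show ?thesis
    by (rule exI[of _ K]) (auto simp: Let_def T_def[symmetric] intro!: main)
qed

end
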